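(* Let $\mathcal D$ be a distribution on $\mathcal X^k\times\mathbb R$, and let $\mathcal X=\mathcal X_{seen}\sqcup\mathcal X_{uns}$ where $\mathcal X_{seen}$ is the smallest set with $x\in\mathcal X_{seen}^k$ almost surely for $(x,y)\sim\mathcal D$. For any number of SGD steps $t$ and any step sizes $\eta_1,\dots,\eta_t>0$, and any $x_1,x_2\in\mathcal X_{uns}^k$, $$\mathbb E_{\theta^t}[f_{\mathrm{MLP}}(x_1;\theta^t)]=\mathbb E_{\theta^t}[f_{\mathrm{MLP}}(x_2;\theta^t)]$$ (indeed $f_{\mathrm{MLP}}(x_1;\theta^t)$ and $f_{\mathrm{MLP}}(x_2;\theta^t)$ have the same distribution), whenever these expectations exist.
   Context: $\mathcal X$ is a finite token alphabet with $m=|\mathcal X|$. The MLP with depth $L$, width $d$ and differentiable activation $\phi$ has weights $\theta=\{W_1,\dots,W_L,w\}$ with $W_1\in\mathbb R^{d\times km}$, $W_\ell\in\mathbb R^{d\times d}$ ($\ell\ge2$), $w\in\mathbb R^d$, and outputs $f_{\mathrm{MLP}}(x;\theta)=w^Tz_L(x;\theta)$ where $z_0(x)=(e_{x_1},\dots,e_{x_k})\in\mathbb R^{km}$ (concatenated one-hot encodings) and $z_\ell(x;\theta)=\phi(W_\ell z_{\ell-1}(x;\theta))$ elementwise for $\ell\ge1$. One-pass SGD: $\theta^0$ has independent Gaussian entries, i.i.d. within each of $W_1^0,\dots,W_L^0,w^0$; then $\theta^s=\theta^{s-1}-\eta_s\nabla_\theta(f_{\mathrm{MLP}}(x^s;\theta)-y^s)^2|_{\theta=\theta^{s-1}}$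 with fresh independent samples $(x^s,y^s)\sim\mathcal D$. *)

theory Defs
  imports "HOL-Probability.Probability"
begin

text \<open>Token alphabet: the tokens are 0,...,m-1 (so m = card of the alphabet).
  An input x in X^k is a list of length k with entries < m.\<close>

definition seqs :: "nat \<Rightarrow> nat \<Rightarrow> nat list set" where
  "seqs k m = {x. length x = k \<and> set x \<subseteq> {..<m}}"

text \<open>Parameter indices: WI l i j is entry (i,j) of W_l (1 \<le> l \<le> L), VI i is entry i of w.\<close>
datatype pidx = WI nat nat nat | VI nat

definition in_width :: "nat \<Rightarrow> nat \<Rightarrow> nat \<Rightarrow> nat \<Rightarrow> nat" where
  "in_width k m d l = (if l = 1 then k * m else d)"

definition param_idx :: "nat \<Rightarrow> nat \<Rightarrow> nat \<Rightarrow> nat \<Rightarrow> pidx set" where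
  "param_idx k m L d =
     {WI l i j | l i j. 1 \<le> l \<and> l \<le> L \<and> i < d \<and> j < in_width k m d l} \<union> {VI i | i. i < d}"

text \<open>Concatenated one-hot encoding: coordinate p*m + c is 1 iff x_p = c.\<close>
definition onehot :: "nat \<Rightarrow> nat list \<Rightarrow> nat \<Rightarrow> real" where
  "onehot m x j = (if j < length x * m \<and> x ! (j div m) = j mod m then 1 else 0)"

fun zlayer :: "nat \<Rightarrow> nat \<Rightarrow> nat \<Rightarrow> (real \<Rightarrow> real) \<Rightarrow> (pidx \<Rightarrow> real) \<Rightarrow> nat list \<Rightarrow> nat \<Rightarrow> nat \<Rightarrow> real" where
  "zlayer k m d \<phi> \<theta> x 0 = onehot m x"
| "zlayer k m d \<phi> \<theta> x (Suc l) =
     (\<lambda>i. \<phi> (\<Sum>j<in_width k m d (Suc l). \<theta> (WI (Suc l) i j) * zlayer k m d \<phi> \<theta> x l j))"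

definition f_mlp :: "nat \<Rightarrow> nat \<Rightarrow> nat \<Rightarrow> nat \<Rightarrow> (real \<Rightarrow> real) \<Rightarrow> (pidx \<Rightarrow> real) \<Rightarrow> nat list \<Rightarrow> real" where
  "f_mlp k m L d \<phi> \<theta> x = (\<Sum>i<d. \<theta> (VI i) * zlayer k m d \<phi> \<theta> x L i)"

definition sq_loss :: "nat \<Rightarrow> nat \<Rightarrow> nat \<Rightarrow> nat \<Rightarrow> (real \<Rightarrow> real) \<Rightarrow> (pidx \<Rightarrow> real) \<Rightarrow> nat list \<times> real \<Rightarrow> real" where
  "sq_loss k m L d \<phi> \<theta> xy = (f_mlp k m L d \<phi> \<theta> (fst xy) - snd xy)\<^sup>2"

definition loss_grad :: "nat \<Rightarrow> nat \<Rightarrow> nat \<Rightarrow> nat \<Rightarrow> (real \<Rightarrow> real) \<Rightarrow> (pidx \<Rightarrow> real) \<Rightarrow> nat list \<times> real \<Rightarrow> pidx \<Rightarrow> real" where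
  "loss_grad k m L d \<phi> \<theta> xy p = deriv (\<lambda>s. sq_loss k m L d \<phi> (\<theta>(p := s)) xy) (\<theta> p)"

definition sgd_step :: "nat \<Rightarrow> nat \<Rightarrow> nat \<Rightarrow> nat \<Rightarrow> (real \<Rightarrow> real) \<Rightarrow> real \<Rightarrow> (pidx \<Rightarrow> real) \<Rightarrow> nat list \<times> real \<Rightarrow> pidx \<Rightarrow> real" where
  "sgd_step k m L d \<phi> \<eta> \<theta> xy =
     (\<lambda>p. if p \<in> param_idx k m L d then \<theta> p - \<eta> * loss_grad k m L d \<phi> \<theta> xy p else \<theta> p)"

fun sgd :: "nat \<Rightarrow> nat \<Rightarrow> nat \<Rightarrow> nat \<Rightarrow> (real \<Rightarrow> real) \<Rightarrow> (nat \<Rightarrow> real) \<Rightarrow> (pidx \<Rightarrow> real) \<Rightarrow> (nat \<Rightarrow> nat list \<times> real) \<Rightarrow> nat \<Rightarrow> pidx \<Rightarrow> real" where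
  "sgd k m L d \<phi> \<eta> \<theta>0 S 0 = \<theta>0"
| "sgd k m L d \<phi> \<eta> \<theta>0 S (Suc s) = sgd_step k m L d \<phi> (\<eta> (Suc s)) (sgd k m L d \<phi> \<eta> \<theta>0 S s) (S (Suc s))"

definition init_measure :: "nat \<Rightarrow> nat \<Rightarrow> nat \<Rightarrow> nat \<Rightarrow> (nat \<Rightarrow> real) \<Rightarrow> (nat \<Rightarrow> real) \<Rightarrow> (pidx \<Rightarrow> real) measure" where
  "init_measure k m L d \<mu> \<sigma> = PiM (param_idx k m L d)
     (\<lambda>p. case p of WI l i j \<Rightarrow> density lborel (normal_density (\<mu> l) (\<sigma> l))
                  | VI i \<Rightarrow> density lborel (normal_density (\<mu> 0) (\<sigma> 0)))"

definition seen_tokens :: "nat \<Rightarrow> (nat list \<times> real) measure \<Rightarrow> nat set" where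
  "seen_tokens m D = \<Inter> {S. S \<subseteq> {..<m} \<and> (AE xy in D. set (fst xy) \<subseteq> S)}"

definition unseen_tokens :: "nat \<Rightarrow> (nat list \<times> real) measure \<Rightarrow> nat set" where
  "unseen_tokens m D = {..<m} - seen_tokens m D"

end

theory Submission imports Defs begin

definition sw :: "nat list \<Rightarrow> nat list \<Rightarrow> nat \<Rightarrow> nat \<Rightarrow> nat" where
  "sw a b p c = (if p < length a then (if c = a!p then b!p else if c = b!p then a!p else c) else c)"

definition tau :: "nat list \<Rightarrow> nat list \<Rightarrow> nat list \<Rightarrow> nat list" where
  "tau a b x = map (\<lambda>p. sw a b p (x!p)) [0..<length x]"

definition rho :: "nat \<Rightarrow> nat list \<Rightarrow> nat list \<Rightarrow> nat \<Rightarrow> nat" where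
  "rho m a b j = (j div m) * m + sw a b (j div m) (j mod m)"

definition pii :: "nat \<Rightarrow> nat list \<Rightarrow> nat list \<Rightarrow> pidx \<Rightarrow> pidx" where
  "pii m a b q = (case q of WI l i j \<Rightarrow> if l = 1 then WI 1 i (rho m a b j) else WI l i j | VI i \<Rightarrow> VI i)"

lemma sw_sw[simp]: "sw a b p (sw a b p c) = c"
  unfolding sw_def by auto

lemma sw_lt: assumes "\<forall>p<length a. a!p < m \<and> b!p < m" "c < m" shows "sw a b p c < m"
  using assms unfolding sw_def by auto

lemma length_tau[simp]: "length (tau a b x) = length x" by (simp add: tau_def)
lemma nth_tau[simp]: "p < length x \<Longrightarrow> tau a b x ! p = sw a b p (x!p)" by (simp add: tau_def)
lemma tau_tau[simp]: "tau a b (tau a b x) = x"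
  by (rule nth_equalityI) auto

context
  fixes m :: nat and a b :: "nat list"
  assumes m: "0 < m" and ab: "\<forall>p<length a. a!p < m \<and> b!p < m"
begin

lemma rho_div[simp]: "rho m a b j div m = j div m"
  using sw_lt[OF ab, of "j mod m" "j div m"] m by (simp add: rho_def)

lemma rho_mod[simp]: "rho m a b j mod m = sw a b (j div m) (j mod m)"
  using sw_lt[OF ab, of "j mod m" "j div m"] m by (simp add: rho_def)

lemma rho_rho[simp]: "rho m a b (rho m a b j) = j"
proof -
  have "rho m a b (rho m a b j) = (j div m) * m + j mod m"
    by (subst rho_def) simp
  then show ?thesis by simp
qed

lemma rho_lt_iff: "rho m a b j < n * m \<longleftrightarrow> j < n * m"
proof -
  have "\<And>x. x < n * m \<longleftrightarrow> x div m < n" using m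
    by (metis less_mult_imp_div_less mult.commute div_less_iff_less_mult)
  then show ?thesis by (metis rho_div)
qed

lemma onehot_rho: "onehot m x (rho m a b j) = onehot m (tau a b x) j"
proof -
  have "(x ! (j div m) = sw a b (j div m) (j mod m)) \<longleftrightarrow> (sw a b (j div m) (x ! (j div m)) = j mod m)"
    by (metis sw_sw)
  moreover have "j < length x * m \<Longrightarrow> j div m < length x" using m
    by (simp add: div_less_iff_less_mult)
  ultimately show ?thesis unfolding onehot_def by (auto simp: rho_lt_iff)
qed

lemma pii_pii[simp]: "pii m a b (pii m a b q) = q"
  by (cases q) (auto simp: pii_def)

lemma zlayer_pii:
  "zlayer k m d \<phi> (\<theta> \<circ> pii m a b) x (Suc l) = zlayer k m d \<phi> \<theta> (tau a b x) (Suc l)"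
proof (induction l)
  case 0
  show ?case
  proof
    fix i
    have "(\<Sum>j<k*m. \<theta> (WI 1 i (rho m a b j)) * onehot m x j) = (\<Sum>j<k*m. \<theta> (WI 1 i j) * onehot m (tau a b x) j)"
      by (rule sum.reindex_bij_witness[where i="rho m a b" and j="rho m a b"])
         (auto simp: rho_lt_iff onehot_rho[symmetric])
    then show "zlayer k m d \<phi> (\<theta> \<circ> pii m a b) x (Suc 0) i = zlayer k m d \<phi> \<theta> (tau a b x) (Suc 0) i"
      by (simp add: in_width_def pii_def)
  qed
next
  case (Suc l)
  show ?case
    by (simp only: zlayer.simps(2)[of _ _ _ _ _ _ "Suc l"] Suc) (simp add: pii_def)
qed

lemma f_pii: "1 \<le> L \<Longrightarrow> f_mlp k m L d \<phi> (\<theta> \<circ> pii m a b) x = f_mlp k m L d \<phi> \<theta> (tau a b x)"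
  using zlayer_pii[of k d \<phi> \<theta> x "L - 1"] by (simp add: f_mlp_def pii_def)

lemma pii_param: "pii m a b q \<in> param_idx k m L d \<longleftrightarrow> q \<in> param_idx k m L d"
  by (cases q) (auto simp: pii_def param_idx_def in_width_def rho_lt_iff)

lemma upd_pii: "(\<theta> \<circ> pii m a b)(q := s) = (\<theta>(pii m a b q := s)) \<circ> pii m a b"
  by (rule ext) (auto simp: fun_upd_def, metis pii_pii)

definition tau' :: "nat list \<times> real \<Rightarrow> nat list \<times> real" where
  "tau' xy = (tau a b (fst xy), snd xy)"

lemma step_pii: "1 \<le> L \<Longrightarrow>
  sgd_step k m L d \<phi> \<eta> (\<theta> \<circ> pii m a b) xy = sgd_step k m L d \<phi> \<eta> \<theta> (tau' xy) \<circ> pii m a b"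
  apply (rule ext)
  apply (simp add: sgd_step_def pii_param loss_grad_def upd_pii sq_loss_def f_pii tau'_def)
  done

lemma sgd_pii: "1 \<le> L \<Longrightarrow> (\<forall>s\<in>{1..n}. S' s = tau' (S s)) \<Longrightarrow>
  sgd k m L d \<phi> \<eta> (\<theta>0 \<circ> pii m a b) S n = sgd k m L d \<phi> \<eta> \<theta>0 S' n \<circ> pii m a b"
  by (induction n) (auto simp: step_pii)

end

lemma distr_invol:
  assumes meas: "\<Phi> \<in> measurable \<Omega> \<Omega>" and pres: "distr \<Omega> \<Omega> \<Phi> = \<Omega>"
    and inv: "\<And>\<omega>. \<omega> \<in> space \<Omega> \<Longrightarrow> \<Phi> (\<Phi> \<omega>) = \<omega>"
    and F: "\<And>\<omega>. \<omega> \<in> space \<Omega> \<Longrightarrow> F2 \<omega> = F1 (\<Phi> \<omega>)"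
  shows "distr \<Omega> N F1 = distr \<Omega> N F2"
proof -
  have sp: "\<And>\<omega>. \<omega> \<in> space \<Omega> \<Longrightarrow> \<Phi> \<omega> \<in> space \<Omega>" using meas by (meson measurable_space)
  have eq: "emeasure \<Omega> (F1 -` A \<inter> space \<Omega>) = emeasure \<Omega> (F2 -` A \<inter> space \<Omega>)" for A
  proof -
    define X where "X = F1 -` A \<inter> space \<Omega>"
    have Y: "F2 -` A \<inter> space \<Omega> = \<Phi> -` X \<inter> space \<Omega>"
      using F sp by (auto simp: X_def)
    show ?thesis
    proof (cases "X \<in> sets \<Omega>")
      case True
      have "emeasure \<Omega> (\<Phi> -` X \<inter> space \<Omega>) = emeasure (distr \<Omega> \<Omega> \<Phi>) X"
        using True meas by (simp add: emeasure_distr)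
      then show ?thesis using Y pres by (simp add: X_def)
    next
      case False
      have "\<Phi> -` X \<inter> space \<Omega> \<notin> sets \<Omega>"
      proof
        assume "\<Phi> -` X \<inter> space \<Omega> \<in> sets \<Omega>"
        then have "\<Phi> -` (\<Phi> -` X \<inter> space \<Omega>) \<inter> space \<Omega> \<in> sets \<Omega>"
          by (rule measurable_sets[OF meas])
        moreover have "\<Phi> -` (\<Phi> -` X \<inter> space \<Omega>) \<inter> space \<Omega> = X"
          using inv sp by (auto simp: X_def)
        ultimately show False using False by simp
      qed
      then show ?thesis using False Y by (simp add: emeasure_notin_sets X_def)
    qed
  qed
  show ?thesis unfolding distr_def using eq by simp
qed

lemma AE_seen:
  assumes "prob_space D"
  shows "AE xy in D. set (fst xy) \<subseteq> seen_tokens m D"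
proof -
  let ?S = "{S. S \<subseteq> {..<m} \<and> (AE xy in D. set (fst xy) \<subseteq> S)}"
  have fin: "finite ?S" by (rule finite_subset[of _ "Pow {..<m}"]) auto
  have "AE xy in D. \<forall>S\<in>?S. set (fst xy) \<subseteq> S"
    by (rule AE_finite_allI[OF fin]) auto
  then show ?thesis unfolding seen_tokens_def by (rule AE_mp) auto
qed

context
  fixes m :: nat and a b :: "nat list"
  assumes m: "0 < m" and ab: "\<forall>p<length a. a!p < m \<and> b!p < m"
begin

lemma tau_seqs: "x \<in> seqs k m \<Longrightarrow> tau a b x \<in> seqs k m"
  unfolding seqs_def using sw_lt[OF ab]
  by (auto simp: in_set_conv_nth subset_iff)

lemma tau'_meas:
  assumes "sets D = sets (count_space (seqs k m) \<Otimes>\<^sub>M borel)"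
  shows "tau' a b \<in> measurable D D"
proof -
  have "tau a b \<in> measurable (count_space (seqs k m)) (count_space (seqs k m))"
    using tau_seqs by (auto simp: measurable_count_space_eq1)
  then have "tau' a b \<in> measurable (count_space (seqs k m) \<Otimes>\<^sub>M borel) (count_space (seqs k m) \<Otimes>\<^sub>M borel)"
    unfolding tau'_def[OF m ab] by measurable
  then show ?thesis using measurable_cong_sets[OF assms assms] by simp
qed

lemma tau_fix: "length b = length a \<Longrightarrow> (\<forall>p<length x. x!p \<notin> set a \<and> x!p \<notin> set b) \<Longrightarrow> tau a b x = x"
  by (rule nth_equalityI) (auto simp: sw_def)

lemma distr_tau':
  assumes D: "prob_space D" and sD: "sets D = sets (count_space (seqs k m) \<Otimes>\<^sub>M borel)"
    and lab: "length b = length a" and ua: "set a \<inter> seen_tokens m D = {}" and ub: "set b \<inter> seen_tokens m D = {}"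
  shows "distr D D (tau' a b) = D"
proof (rule measure_eqI)
  have meas: "tau' a b \<in> measurable D D" by (rule tau'_meas[OF sD])
  fix A assume A: "A \<in> sets (distr D D (tau' a b))"
  then have A': "A \<in> sets D" by simp
  have "emeasure D (tau' a b -` A \<inter> space D) = emeasure D A"
  proof (rule emeasure_eq_AE)
    show "AE x in D. (x \<in> tau' a b -` A \<inter> space D) = (x \<in> A)"
      using AE_seen[OF D, of m]
    proof (rule AE_mp)
      show "AE x in D. set (fst x) \<subseteq> seen_tokens m D \<longrightarrow> (x \<in> tau' a b -` A \<inter> space D) = (x \<in> A)"
      proof (rule AE_I2, rule impI)
        fix x assume x: "x \<in> space D" and s: "set (fst x) \<subseteq> seen_tokens m D"
        have "tau a b (fst x) = fst x"
          by (rule tau_fix[OF lab]) (use s ua ub nth_mem in blast)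
        then have "tau' a b x = x" by (simp add: tau'_def[OF m ab])
        then show "(x \<in> tau' a b -` A \<inter> space D) = (x \<in> A)" using x by auto
      qed
    qed
    show "tau' a b -` A \<inter> space D \<in> sets D" using meas A' by (rule measurable_sets)
  qed (rule A')
  then show "emeasure (distr D D (tau' a b)) A = emeasure D A"
    using A' meas by (simp add: emeasure_distr)
qed simp

end

definition initfam :: "(nat \<Rightarrow> real) \<Rightarrow> (nat \<Rightarrow> real) \<Rightarrow> pidx \<Rightarrow> real measure" where
  "initfam \<mu> \<sigma> = (\<lambda>p. case p of WI l i j \<Rightarrow> density lborel (normal_density (\<mu> l) (\<sigma> l))
                  | VI i \<Rightarrow> density lborel (normal_density (\<mu> 0) (\<sigma> 0)))"

lemma init_eq: "init_measure k m L d \<mu> \<sigma> = PiM (param_idx k m L d) (initfam \<mu> \<sigma>)"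
  by (simp add: init_measure_def initfam_def)

lemma prob_initfam: "(\<And>l. \<sigma> l > 0) \<Longrightarrow> prob_space (initfam \<mu> \<sigma> q)"
  by (cases q) (auto simp: initfam_def prob_space_normal_density)

lemma initfam_pii: "initfam \<mu> \<sigma> (pii m a b q) = initfam \<mu> \<sigma> q"
  by (cases q) (auto simp: initfam_def pii_def)

context
  fixes m :: nat and a b :: "nat list"
  assumes m: "0 < m" and ab: "\<forall>p<length a. a!p < m \<and> b!p < m"
begin

lemma reindex_meas:
  "(\<lambda>\<theta>. \<lambda>q\<in>param_idx k m L d. \<theta> (pii m a b q)) \<in> measurable (PiM (param_idx k m L d) (initfam \<mu> \<sigma>)) (PiM (param_idx k m L d) (initfam \<mu> \<sigma>))"
proof (rule measurable_restrict)
  fix q assume q: "q \<in> param_idx k m L d"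
  then have "pii m a b q \<in> param_idx k m L d" using pii_param[OF m ab] by simp
  then have "(\<lambda>\<theta>. \<theta> (pii m a b q)) \<in> measurable (PiM (param_idx k m L d) (initfam \<mu> \<sigma>)) (initfam \<mu> \<sigma> (pii m a b q))"
    by (rule measurable_component_singleton)
  then show "(\<lambda>\<theta>. \<theta> (pii m a b q)) \<in> measurable (PiM (param_idx k m L d) (initfam \<mu> \<sigma>)) (initfam \<mu> \<sigma> q)"
    by (simp add: initfam_pii)
qed

lemma reindex_distr:
  assumes sg: "\<And>l. \<sigma> l > 0"
  shows "distr (PiM (param_idx k m L d) (initfam \<mu> \<sigma>)) (PiM (param_idx k m L d) (initfam \<mu> \<sigma>))
     (\<lambda>\<theta>. \<lambda>q\<in>param_idx k m L d. \<theta> (pii m a b q)) = PiM (param_idx k m L d) (initfam \<mu> \<sigma>)"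
proof -
  have inj: "inj_on (pii m a b) (param_idx k m L d)"
    by (metis inj_onI pii_pii[OF m ab])
  have f: "pii m a b \<in> param_idx k m L d \<rightarrow> param_idx k m L d"
    using pii_param[OF m ab] by auto
  have "distr (PiM (param_idx k m L d) (initfam \<mu> \<sigma>)) (\<Pi>\<^sub>M i\<in>param_idx k m L d. initfam \<mu> \<sigma> (pii m a b i))
     (\<lambda>\<theta>. \<lambda>q\<in>param_idx k m L d. \<theta> (pii m a b q)) = (\<Pi>\<^sub>M i\<in>param_idx k m L d. initfam \<mu> \<sigma> (pii m a b i))"
    by (rule distr_PiM_reindex[OF prob_initfam[OF sg] inj f])
  then show ?thesis by (simp add: initfam_pii)
qed

lemma Omega_pres:
  fixes k L d t :: nat and \<mu> \<sigma> :: "nat \<Rightarrow> real" and D :: "(nat list \<times> real) measure"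
  assumes sg: "\<And>l. \<sigma> l > 0" and D: "prob_space D" and sD: "sets D = sets (count_space (seqs k m) \<Otimes>\<^sub>M borel)"
    and lab: "length b = length a" and ua: "set a \<inter> seen_tokens m D = {}" and ub: "set b \<inter> seen_tokens m D = {}"
  defines "A \<equiv> PiM (param_idx k m L d) (initfam \<mu> \<sigma>)" and "B \<equiv> PiM {1..t} (\<lambda>_. D)"
    and "f \<equiv> (\<lambda>\<theta>. \<lambda>q\<in>param_idx k m L d. \<theta> (pii m a b q))" and "g \<equiv> compose {1..t} (tau' a b)"
  shows "distr (A \<Otimes>\<^sub>M B) (A \<Otimes>\<^sub>M B) (\<lambda>(x, y). (f x, g y)) = A \<Otimes>\<^sub>M B"
    and "(\<lambda>(x, y). (f x, g y)) \<in> measurable (A \<Otimes>\<^sub>M B) (A \<Otimes>\<^sub>M B)"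
proof -
  have fm: "f \<in> measurable A A" unfolding f_def A_def by (rule reindex_meas)
  have tm: "\<And>i. i \<in> {1..t} \<Longrightarrow> tau' a b \<in> measurable D D" by (rule tau'_meas[OF m ab sD])
  have gm: "g \<in> measurable B B" unfolding g_def B_def compose_def
    by (rule measurable_restrict) (use tm in auto)
  have gd: "distr B B g = B"
    unfolding g_def B_def
    by (subst distr_PiM_finite_prob_space'[OF _ _ _ tm]) (auto simp: D distr_tau'[OF m ab D sD lab ua ub])
  have fd: "distr A A f = A" unfolding f_def A_def by (rule reindex_distr[OF sg])
  interpret Bp: prob_space B unfolding B_def by (rule prob_space_PiM) (rule D)
  have "distr A A f \<Otimes>\<^sub>M distr B B g = distr (A \<Otimes>\<^sub>M B) (A \<Otimes>\<^sub>M B) (\<lambda>(x, y). (f x, g y))"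
    by (rule pair_measure_distr[OF fm gm]) (simp add: gd Bp.sigma_finite_measure)
  then show "distr (A \<Otimes>\<^sub>M B) (A \<Otimes>\<^sub>M B) (\<lambda>(x, y). (f x, g y)) = A \<Otimes>\<^sub>M B"
    by (simp add: fd gd)
  show "(\<lambda>(x, y). (f x, g y)) \<in> measurable (A \<Otimes>\<^sub>M B) (A \<Otimes>\<^sub>M B)"
    using fm gm by measurable
qed

end

theorem mainTheorem15:
  fixes k m L d t :: nat and \<phi> :: "real \<Rightarrow> real"
    and \<mu> \<sigma> :: "nat \<Rightarrow> real" and \<eta> :: "nat \<Rightarrow> real"
    and D :: "(nat list \<times> real) measure" and x1 x2 :: "nat list"
  assumes "1 \<le> L"
    and "\<And>u. \<phi> differentiable (at u)"
    and "\<And>l. \<sigma> l > 0"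
    and "prob_space D"
    and "sets D = sets (count_space (seqs k m) \<Otimes>\<^sub>M borel)"
    and "\<And>s. s \<in> {1..t} \<Longrightarrow> \<eta> s > 0"
    and "length x1 = k" and "set x1 \<subseteq> unseen_tokens m D"
    and "length x2 = k" and "set x2 \<subseteq> unseen_tokens m D"
  shows "let \<Omega> = init_measure k m L d \<mu> \<sigma> \<Otimes>\<^sub>M PiM {1..t} (\<lambda>_. D);
             F = (\<lambda>x \<omega>. f_mlp k m L d \<phi> (sgd k m L d \<phi> \<eta> (fst \<omega>) (snd \<omega>) t) x)
         in distr \<Omega> borel (F x1) = distr \<Omega> borel (F x2)
            \<and> (integrable \<Omega> (F x1) \<and> integrable \<Omega> (F x2)
                 \<longrightarrow> (\<integral>\<omega>. F x1 \<omega> \<partial>\<Omega>) = (\<integral>\<omega>. F x2 \<omega> \<partial>\<Omega>))"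
proof -
  note L = assms(1) and sg = assms(3) and Dp = assms(4) and sD = assms(5)
  define \<Omega> where "\<Omega> = init_measure k m L d \<mu> \<sigma> \<Otimes>\<^sub>M PiM {1..t} (\<lambda>_. D)"
  define F where "F = (\<lambda>x \<omega>. f_mlp k m L d \<phi> (sgd k m L d \<phi> \<eta> (fst \<omega>) (snd \<omega>) t) x)"
  have dist: "distr \<Omega> borel (F x1) = distr \<Omega> borel (F x2)"
  proof (cases "x1 = x2")
    case True then show ?thesis by simp
  next
    case False
    have uns: "unseen_tokens m D \<subseteq> {..<m}" by (auto simp: unseen_tokens_def)
    have "k \<noteq> 0" using False assms(7,9) by auto
    then have "x1 ! 0 \<in> set x1" using assms(7) by auto
    then have m: "0 < m" using assms(8) uns by auto
    have ab: "\<forall>p<length x1. x1!p < m \<and> x2!p < m"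
      using assms(7-10) uns nth_mem by (metis lessThan_iff subset_iff)
    have lab: "length x2 = length x1" using assms(7,9) by simp
    have ua: "set x1 \<inter> seen_tokens m D = {}" and ub: "set x2 \<inter> seen_tokens m D = {}"
      using assms(8,10) by (auto simp: unseen_tokens_def)
    have tx: "tau x1 x2 x1 = x2"
      by (rule nth_equalityI) (auto simp: lab sw_def)
    define P where "P = param_idx k m L d"
    define A where "A = PiM P (initfam \<mu> \<sigma>)"
    define B where "B = PiM {1..t} (\<lambda>_. D)"
    define f where "f = (\<lambda>\<theta>::pidx\<Rightarrow>real. \<lambda>q\<in>P. \<theta> (pii m x1 x2 q))"
    define g where "g = compose {1..t} (tau' x1 x2)"
    have \<Omega>: "\<Omega> = A \<Otimes>\<^sub>M B" by (simp add: \<Omega>_def A_def B_def P_def init_eq)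
    have OP: "(\<lambda>(x, y). (f x, g y)) \<in> measurable \<Omega> \<Omega>" "distr \<Omega> \<Omega> (\<lambda>(x, y). (f x, g y)) = \<Omega>"
      using Omega_pres[OF m ab sg Dp sD lab ua ub, where L=L and d=d and t=t and \<mu>=\<mu>]
      unfolding \<Omega> A_def B_def f_def g_def P_def by simp_all
    have tt: "tau' x1 x2 (tau' x1 x2 xy) = xy" for xy
      by (simp add: tau'_def[OF m ab])
    have fpi: "f \<theta> = \<theta> \<circ> pii m x1 x2" if "\<theta> \<in> space A" for \<theta>
    proof
      fix q
      have ext: "\<theta> \<in> extensional P" using that by (simp add: A_def space_PiM PiE_def)
      show "f \<theta> q = (\<theta> \<circ> pii m x1 x2) q"
        using pii_param[OF m ab, of q k L d] ext
        by (cases "q \<in> P") (auto simp: f_def P_def extensional_def)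
    qed
    show ?thesis
    proof (rule distr_invol[OF OP(1) OP(2)])
      fix \<omega> assume w: "\<omega> \<in> space \<Omega>"
      obtain \<theta> S where \<omega>: "\<omega> = (\<theta>, S)" and th: "\<theta> \<in> space A" and S: "S \<in> space B"
        using w by (cases \<omega>) (auto simp: \<Omega> space_pair_measure)
      have "(\<lambda>(x, y). (f x, g y)) \<omega> \<in> space \<Omega>" using OP(1) w by (rule measurable_space)
      then have fth: "f \<theta> \<in> space A" by (simp add: \<omega> \<Omega> space_pair_measure)
      have Sx: "S \<in> extensional {1..t}" using S by (simp add: B_def space_PiM PiE_def)
      have "f (f \<theta>) = \<theta>"
        by (simp only: fpi[OF fth]) (simp add: fpi[OF th] comp_def pii_pii[OF m ab])
      moreover have "g (g S) = S"
        using Sx by (auto simp: g_def compose_def fun_eq_iff tt extensional_def)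
      ultimately show "(\<lambda>(x, y). (f x, g y)) ((\<lambda>(x, y). (f x, g y)) \<omega>) = \<omega>" by (simp add: \<omega>)
      have "sgd k m L d \<phi> \<eta> (\<theta> \<circ> pii m x1 x2) (g S) t = sgd k m L d \<phi> \<eta> \<theta> S t \<circ> pii m x1 x2"
        by (rule sgd_pii[OF m ab L]) (simp add: g_def compose_def tt)
      then show "F x2 \<omega> = F x1 ((\<lambda>(x, y). (f x, g y)) \<omega>)"
        by (simp add: F_def \<omega> fpi[OF th] f_pii[OF m ab L] tx)
    qed
  qed
  moreover have "integrable \<Omega> (F x1) \<and> integrable \<Omega> (F x2)
                 \<longrightarrow> (\<integral>\<omega>. F x1 \<omega> \<partial>\<Omega>) = (\<integral>\<omega>. F x2 \<omega> \<partial>\<Omega>)"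
  proof
    assume "integrable \<Omega> (F x1) \<and> integrable \<Omega> (F x2)"
    then have m1: "F x1 \<in> borel_measurable \<Omega>" and m2: "F x2 \<in> borel_measurable \<Omega>" by auto
    have "(\<integral>\<omega>. F x1 \<omega> \<partial>\<Omega>) = (\<integral>y. y \<partial>distr \<Omega> borel (F x1))"
      by (simp add: integral_distr[OF m1])
    also have "\<dots> = (\<integral>y. y \<partial>distr \<Omega> borel (F x2))" by (simp add: dist)
    also have "\<dots> = (\<integral>\<omega>. F x2 \<omega> \<partial>\<Omega>)"
      by (simp add: integral_distr[OF m2])
    finally show "(\<integral>\<omega>. F x1 \<omega> \<partial>\<Omega>) = (\<integral>\<omega>. F x2 \<omega> \<partial>\<Omega>)" .
  qed
  ultimately show ?thesis unfolding Let_def \<Omega>_def F_def by simp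
qed

end
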